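(* Let $X_1,X_2,X_3,X_4$ be finite discrete random variables, where $X_1$ and $X_3$ are binary with values in $\{1,2\}$ and $X_i$ takes values in $[r_i]=\{1,\dots,r_i\}$ for $i\in\{2,4\}$. Suppose that $X_1 \perp\!\!\!\perp X_3 \mid (X_2,X_4)$ and $X_2 \perp\!\!\!\perp X_4 \mid (X_1,X_3)$. Then at least one of the following is true: (1) the joint distribution lies in the closure of the graphical model $\mathcal{M}_{C_4}$; (2) there are $i\in\{2,4\}$ and sets $E,F\subseteq[r_i]$ such that (almost surely): if $(X_1,X_3)=(1,1)$ then $X_i\in E$; if $(X_1,X_3)=(1,2)$ then $X_i\in F$; if $(X_1,X_3)=(2,1)$ then $X_i\notin F$; if $(X_1,X_3)=(2,2)$ then $X_i\notin E$. Conversely, any probability distribution of $(X_1,X_2,X_3,X_4)$ that satisfies one of the statements (1) or (2) and that satisfies $X_2 \perp\!\!\!\perp X_4 \mid (X_1,X_3)$ also satisfies $X_1 \perp\!\!\!\perp X_3 \mid (X_2,X_4)$ and $X_2 \perp\!\!\!\perp X_4 \mid (X_1,X_3)$.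
   Context: $C_4$ is the four-cycle graph on vertices $\{1,2,3,4\}$ with edges $\{1,2\},\{2,3\},\{3,4\},\{1,4\}$. The graphical model $\mathcal{M}_{C_4}$ is the set of strictly positive probability distributions $p$ on $\{1,2\}\times[r_2]\times\{1,2\}\times[r_4]$ that factor as $p(x_1,x_2,x_3,x_4)=\psi_{12}(x_1,x_2)\psi_{23}(x_2,x_3)\psi_{34}(x_3,x_4)\psi_{14}(x_1,x_4)$ for some functions $\psi_{ij}$; its closure is taken in the Euclidean topology. Distributions may have zeros; conditional independence conditions only on events of positive probability. *)

theory Defs
  imports "HOL-Analysis.Analysis"
begin

text \<open>A joint distribution of (X1,X2,X3,X4) on {1,2} x [r2] x {1,2} x [r4] is represented
  by its probability mass function p :: nat => nat => nat => nat => real; only its values on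
  the state space matter.\<close>

type_synonym pmf4 = "nat \<Rightarrow> nat \<Rightarrow> nat \<Rightarrow> nat \<Rightarrow> real"

definition in_space :: "nat \<Rightarrow> nat \<Rightarrow> nat \<Rightarrow> nat \<Rightarrow> nat \<Rightarrow> nat \<Rightarrow> bool" where
  "in_space r2 r4 x1 x2 x3 x4 \<longleftrightarrow>
     x1 \<in> {1..2} \<and> x2 \<in> {1..r2} \<and> x3 \<in> {1..2} \<and> x4 \<in> {1..r4}"

definition is_dist :: "nat \<Rightarrow> nat \<Rightarrow> pmf4 \<Rightarrow> bool" where
  "is_dist r2 r4 p \<longleftrightarrow>
     (\<forall>x1 x2 x3 x4. in_space r2 r4 x1 x2 x3 x4 \<longrightarrow> p x1 x2 x3 x4 \<ge> 0) \<and>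
     (\<Sum>x1\<in>{1..2}. \<Sum>x2\<in>{1..r2}. \<Sum>x3\<in>{1..2}. \<Sum>x4\<in>{1..r4}. p x1 x2 x3 x4) = 1"

definition CI_13_24 :: "nat \<Rightarrow> nat \<Rightarrow> pmf4 \<Rightarrow> bool" where
  "CI_13_24 r2 r4 p \<longleftrightarrow>
     (\<forall>c\<in>{1..r2}. \<forall>d\<in>{1..r4}.
        let m = (\<Sum>a\<in>{1..2}. \<Sum>b\<in>{1..2}. p a c b d) in
        m > 0 \<longrightarrow>
        (\<forall>a\<in>{1..2}. \<forall>b\<in>{1..2}.
           p a c b d / m =
           ((\<Sum>b'\<in>{1..2}. p a c b' d) / m) * ((\<Sum>a'\<in>{1..2}. p a' c b d) / m)))"

definition CI_24_13 :: "nat \<Rightarrow> nat \<Rightarrow> pmf4 \<Rightarrow> bool" where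
  "CI_24_13 r2 r4 p \<longleftrightarrow>
     (\<forall>a\<in>{1..2}. \<forall>b\<in>{1..2}.
        let m = (\<Sum>c\<in>{1..r2}. \<Sum>d\<in>{1..r4}. p a c b d) in
        m > 0 \<longrightarrow>
        (\<forall>c\<in>{1..r2}. \<forall>d\<in>{1..r4}.
           p a c b d / m =
           ((\<Sum>d'\<in>{1..r4}. p a c b d') / m) * ((\<Sum>c'\<in>{1..r2}. p a c' b d) / m)))"

definition model_C4 :: "nat \<Rightarrow> nat \<Rightarrow> pmf4 \<Rightarrow> bool" where
  "model_C4 r2 r4 p \<longleftrightarrow>
     is_dist r2 r4 p \<and>
     (\<forall>x1 x2 x3 x4. in_space r2 r4 x1 x2 x3 x4 \<longrightarrow> p x1 x2 x3 x4 > 0) \<and>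
     (\<exists>\<psi>12 \<psi>23 \<psi>34 \<psi>14 :: nat \<Rightarrow> nat \<Rightarrow> real.
        \<forall>x1 x2 x3 x4. in_space r2 r4 x1 x2 x3 x4 \<longrightarrow>
          p x1 x2 x3 x4 = \<psi>12 x1 x2 * \<psi>23 x2 x3 * \<psi>34 x3 x4 * \<psi>14 x1 x4)"

text \<open>Euclidean closure in the (finite-dimensional) space of functions on the state space:
  limit of a sequence of model distributions, converging coordinatewise on the state space.\<close>

definition closure_model_C4 :: "nat \<Rightarrow> nat \<Rightarrow> pmf4 \<Rightarrow> bool" where
  "closure_model_C4 r2 r4 p \<longleftrightarrow>
     (\<exists>q :: nat \<Rightarrow> pmf4. (\<forall>n. model_C4 r2 r4 (q n)) \<and>
        (\<forall>x1 x2 x3 x4. in_space r2 r4 x1 x2 x3 x4 \<longrightarrow>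
           (\<lambda>n. q n x1 x2 x3 x4) \<longlonglongrightarrow> p x1 x2 x3 x4))"

text \<open>Statement (2) with a given index i in {2,4}: almost surely the implications hold,
  i.e. for every state of positive probability.\<close>

definition coord :: "nat \<Rightarrow> nat \<Rightarrow> nat \<Rightarrow> nat" where
  "coord i x2 x4 = (if i = 2 then x2 else x4)"

definition cond2 :: "nat \<Rightarrow> nat \<Rightarrow> pmf4 \<Rightarrow> bool" where
  "cond2 r2 r4 p \<longleftrightarrow>
     (\<exists>i\<in>{2,4::nat}. \<exists>E F. E \<subseteq> {1..(if i = 2 then r2 else r4)} \<and>
                           F \<subseteq> {1..(if i = 2 then r2 else r4)} \<and>
        (\<forall>x1 x2 x3 x4. in_space r2 r4 x1 x2 x3 x4 \<and> p x1 x2 x3 x4 > 0 \<longrightarrow>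
            ((x1, x3) = (1, 1) \<longrightarrow> coord i x2 x4 \<in> E) \<and>
            ((x1, x3) = (1, 2) \<longrightarrow> coord i x2 x4 \<in> F) \<and>
            ((x1, x3) = (2, 1) \<longrightarrow> coord i x2 x4 \<notin> F) \<and>
            ((x1, x3) = (2, 2) \<longrightarrow> coord i x2 x4 \<notin> E)))"

end

theory Submission
  imports Defs
begin


lemma two_set: "{1..2::nat} = {1,2}" by auto

definition approx_seq :: "(nat \<Rightarrow> nat \<Rightarrow> nat \<Rightarrow> real) \<Rightarrow> (nat \<Rightarrow> real) \<Rightarrow> (nat \<Rightarrow> nat \<Rightarrow> real) \<Rightarrow> bool" where
 "approx_seq Y lam x \<longleftrightarrow> (\<forall>n a b. a \<in> {1,2} \<longrightarrow> b \<in> {1,2} \<longrightarrow> Y n a b > 0) \<and>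
    (\<forall>n. Y n 1 1 * Y n 2 2 = lam n * (Y n 1 2 * Y n 2 1)) \<and>
    (\<forall>a b. a \<in> {1,2} \<longrightarrow> b \<in> {1,2} \<longrightarrow> (\<lambda>n. Y n a b) \<longlonglongrightarrow> x a b)"

definition ee :: "nat \<Rightarrow> real" where "ee n = inverse (real (Suc n))"

lemma ee_pos: "ee n > 0" by (simp add: ee_def)
lemma ee_lim: "ee \<longlonglongrightarrow> 0" unfolding ee_def by (rule LIMSEQ_inverse_real_of_nat)

lemma rank1:
  fixes y :: "nat \<Rightarrow> nat \<Rightarrow> real"
  assumes nn: "\<forall>a\<in>{1,2}. \<forall>b\<in>{1,2}. y a b \<ge> 0" and det: "y 1 1 * y 2 2 = y 1 2 * y 2 1"
  shows "\<exists>f g. (\<forall>a\<in>{1,2}. f a \<ge> 0) \<and> (\<forall>b\<in>{1,2}. g b \<ge> 0) \<and> (\<forall>a\<in>{1,2}. \<forall>b\<in>{1,2}. y a b = f a * g b)"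
proof (cases "y 1 1 + y 1 2 = 0")
  case True
  then have "y 1 1 = 0" "y 1 2 = 0" using nn by auto
  then show ?thesis using nn
    by (intro exI[of _ "\<lambda>a. if a = 1 then 0 else 1"] exI[of _ "\<lambda>b. y 2 b"]) auto
next
  case False
  then have s: "y 1 1 + y 1 2 > 0" using nn by (metis add_nonneg_nonneg insertCI less_eq_real_def)
  define t where "t = (y 2 1 + y 2 2) / (y 1 1 + y 1 2)"
  have e1: "y 2 1 = t * y 1 1"
    using s det unfolding t_def by (simp add: field_simps; simp add: algebra_simps)
  have e2: "y 2 2 = t * y 1 2"
    using s det unfolding t_def by (simp add: field_simps; simp add: algebra_simps)
  have t0: "t \<ge> 0" unfolding t_def using nn s by simp
  have g1: "\<forall>a\<in>{1,2::nat}. (if a = 1 then 1 else t) \<ge> 0" using t0 by auto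
  have g2: "\<forall>b\<in>{1,2::nat}. y 1 b \<ge> 0" using nn by auto
  have g3: "y a b = (if a = 1 then 1 else t) * y 1 b" if "a \<in> {1,2}" "b \<in> {1,2}" for a b :: nat
  proof -
    from that have "a = 1 \<or> a = 2" "b = 1 \<or> b = 2" by auto
    then show ?thesis using e1 e2 by (elim disjE) simp_all
  qed
  show ?thesis
    apply (rule exI[of _ "\<lambda>a. if a = 1 then 1 else t"], rule exI[of _ "\<lambda>b. y 1 b"])
    using g1 g2 g3 by blast
qed

lemma approxA:
  fixes x :: "nat \<Rightarrow> nat \<Rightarrow> real" and l :: real
  assumes nn: "\<forall>a\<in>{1,2}. \<forall>b\<in>{1,2}. x a b \<ge> 0" and l: "l > 0"
    and det: "x 1 1 * x 2 2 = l * (x 1 2 * x 2 1)"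
  shows "\<exists>Y. approx_seq Y (\<lambda>n. l) x"
proof -
  define K where "K a b = (if a = 1 \<and> b = 1 then l else 1)" for a b :: nat
  define y where "y a b = x a b / K a b" for a b
  have Kpos: "K a b > 0" for a b using l by (simp add: K_def)
  have "\<exists>f g. (\<forall>a\<in>{1,2}. f a \<ge> 0) \<and> (\<forall>b\<in>{1,2}. g b \<ge> 0) \<and> (\<forall>a\<in>{1,2}. \<forall>b\<in>{1,2}. y a b = f a * g b)"
  proof (rule rank1)
    show "\<forall>a\<in>{1,2}. \<forall>b\<in>{1,2}. y a b \<ge> 0" using nn Kpos by (auto simp: y_def intro!: divide_nonneg_pos)
    have hy: "x 1 1 = l * y 1 1" "y 2 2 = x 2 2" "y 1 2 = x 1 2" "y 2 1 = x 2 1" using l by (simp_all add: y_def K_def)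
    then have "l * (y 1 1 * y 2 2) = l * (y 1 2 * y 2 1)" using det by (metis mult.assoc)
    then show "y 1 1 * y 2 2 = y 1 2 * y 2 1" using l by simp
  qed
  then obtain f g where f: "\<forall>a\<in>{1,2}. f a \<ge> 0" and g: "\<forall>b\<in>{1,2}. g b \<ge> 0"
    and fg: "\<forall>a\<in>{1,2}. \<forall>b\<in>{1,2}. y a b = f a * g b" by blast
  define Y where "Y n a b = K a b * (f a + ee n) * (g b + ee n)" for n a b
  show ?thesis unfolding approx_seq_def
  proof (intro exI[of _ Y] conjI allI impI)
    fix n a b :: nat assume a: "a \<in> {1,2}" and b: "b \<in> {1,2}"
    have "f a + ee n > 0" using f a ee_pos[of n] by (meson add_nonneg_pos)
    moreover have "g b + ee n > 0" using g b ee_pos[of n] by (meson add_nonneg_pos)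
    ultimately show "Y n a b > 0" unfolding Y_def using Kpos by simp
  next
    fix n show "Y n 1 1 * Y n 2 2 = l * (Y n 1 2 * Y n 2 1)"
      by (simp add: Y_def K_def)
  next
    fix a b :: nat assume a: "a \<in> {1,2}" and b: "b \<in> {1,2}"
    have "(\<lambda>n. K a b * (f a + ee n) * (g b + ee n)) \<longlonglongrightarrow> K a b * (f a + 0) * (g b + 0)"
      by (intro tendsto_intros ee_lim)
    moreover have "K a b * (f a + 0) * (g b + 0) = x a b"
    proof -
      have "x a b = K a b * y a b" using Kpos[of a b] by (simp add: y_def)
      moreover have "y a b = f a * g b" using fg a b by blast
      ultimately show ?thesis by simp
    qed
    ultimately show "(\<lambda>n. Y n a b) \<longlonglongrightarrow> x a b" unfolding Y_def by simp
  qed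
qed

lemma approxB0:
  fixes x :: "nat \<Rightarrow> nat \<Rightarrow> real" and k :: real
  assumes nn: "\<forall>a\<in>{1,2}. \<forall>b\<in>{1,2}. x a b \<ge> 0" and k: "k > 0" and z: "x 1 1 = 0"
  shows "\<exists>Y. approx_seq Y (\<lambda>n. k * (ee n)^2) x"
proof -
  define Y where "Y n a b = (if a = 1 \<and> b = 1 then k * (ee n)^2 * (x 1 2 + ee n) * (x 2 1 + ee n) / (x 2 2 + ee n) else x a b + ee n)" for n a b
  have p12: "x 1 2 + ee n > 0" and p21: "x 2 1 + ee n > 0" and p22: "x 2 2 + ee n > 0" for n
    using nn ee_pos[of n] by (auto intro: add_nonneg_pos)
  have Ypos: "Y n a b > 0" if a: "a \<in> {1,2}" and b: "b \<in> {1,2}" for n a b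
    unfolding Y_def using a b nn ee_pos[of n] p12[of n] p21[of n] p22[of n] k
      by (auto intro: add_nonneg_pos)
  show ?thesis unfolding approx_seq_def
  proof (intro exI[of _ Y] conjI allI impI)
    fix n a b :: nat assume a: "a \<in> {1,2}" and b: "b \<in> {1,2}"
    show "Y n a b > 0" using Ypos a b by blast
  next
    fix n show "Y n 1 1 * Y n 2 2 = k * (ee n)^2 * (Y n 1 2 * Y n 2 1)"
      using p22[of n] by (simp add: Y_def)
  next
    fix a b :: nat assume a: "a \<in> {1,2}" and b: "b \<in> {1,2}"
    show "(\<lambda>n. Y n a b) \<longlonglongrightarrow> x a b"
    proof (cases "a = 1 \<and> b = 1")
      case False
      have "(\<lambda>n. x a b + ee n) \<longlonglongrightarrow> x a b + 0" by (intro tendsto_intros ee_lim)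
      moreover have "(\<lambda>n. Y n a b) = (\<lambda>n. x a b + ee n)" using False by (auto simp: Y_def)
      ultimately show ?thesis by simp
    next
      case True
      have up: "(\<lambda>n. k * ee n * (x 1 2 + ee n) * (x 2 1 + ee n)) \<longlonglongrightarrow> k * 0 * (x 1 2 + 0) * (x 2 1 + 0)"
        by (intro tendsto_intros ee_lim)
      have bnd: "Y n 1 1 \<le> k * ee n * (x 1 2 + ee n) * (x 2 1 + ee n)" for n
      proof -
        have "(ee n)^2 / (x 2 2 + ee n) \<le> ee n"
          using p22[of n] ee_pos[of n] nn by (simp add: field_simps power2_eq_square)
        then have "k * (x 1 2 + ee n) * (x 2 1 + ee n) * ((ee n)^2 / (x 2 2 + ee n)) \<le> k * (x 1 2 + ee n) * (x 2 1 + ee n) * ee n"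
          using k p12[of n] p21[of n] by (intro mult_left_mono) auto
        then show ?thesis by (simp add: Y_def mult_ac)
      qed
      have "(\<lambda>n. Y n 1 1) \<longlonglongrightarrow> 0"
        apply (rule real_tendsto_sandwich[where f="\<lambda>n. 0" and h="\<lambda>n. k * ee n * (x 1 2 + ee n) * (x 2 1 + ee n)"])
        using bnd up Ypos[of 1 1] by (auto intro: less_imp_le always_eventually)
      then show ?thesis using True z by simp
    qed
  qed
qed

lemma approxB:
  fixes x :: "nat \<Rightarrow> nat \<Rightarrow> real" and k :: real
  assumes nn: "\<forall>a\<in>{1,2}. \<forall>b\<in>{1,2}. x a b \<ge> 0" and k: "k > 0" and z: "x 1 1 * x 2 2 = 0"
  shows "\<exists>Y. approx_seq Y (\<lambda>n. k * (ee n)^2) x"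
proof (cases "x 1 1 = 0")
  case True then show ?thesis using approxB0 nn k by blast
next
  case False
  then have z2: "x 2 2 = 0" using z by simp
  define x' where "x' a b = x (3 - a) (3 - b)" for a b :: nat
  have "\<exists>Y. approx_seq Y (\<lambda>n. k * (ee n)^2) x'"
    apply (rule approxB0) using nn k z2 by (auto simp: x'_def)
  then obtain Y' where Y': "approx_seq Y' (\<lambda>n. k * (ee n)^2) x'" by blast
  define Y where "Y n a b = Y' n (3 - a) (3 - b)" for n a b :: nat
  have sw: "a \<in> {1,2} \<Longrightarrow> 3 - a \<in> {1,2::nat}" for a :: nat by auto
  have sw2: "a \<in> {1,2} \<Longrightarrow> 3 - (3 - a) = (a::nat)" for a :: nat by auto
  have "approx_seq Y (\<lambda>n. k * (ee n)^2) x"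
    unfolding approx_seq_def
  proof (intro conjI allI impI)
    fix n a b :: nat assume a: "a \<in> {1,2}" and b: "b \<in> {1,2}"
    show "Y n a b > 0" using Y' sw[OF a] sw[OF b] unfolding approx_seq_def Y_def by blast
    show "(\<lambda>n. Y n a b) \<longlonglongrightarrow> x a b"
      using Y' sw[OF a] sw[OF b] sw2[OF a] sw2[OF b] unfolding approx_seq_def Y_def x'_def by metis
  next
    fix n
    show "Y n 1 1 * Y n 2 2 = k * (ee n)^2 * (Y n 1 2 * Y n 2 1)"
      using Y' unfolding approx_seq_def Y_def by (simp add: mult.commute)
  qed
  then show ?thesis by blast
qed

lemma approxB':
  fixes x :: "nat \<Rightarrow> nat \<Rightarrow> real" and k :: real
  assumes nn: "\<forall>a\<in>{1,2}. \<forall>b\<in>{1,2}. x a b \<ge> 0" and k: "k > 0" and z: "x 1 2 * x 2 1 = 0"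
  shows "\<exists>Y. approx_seq Y (\<lambda>n. k / (ee n)^2) x"
proof -
  define x' where "x' a b = x a (3 - b)" for a b :: nat
  have "\<exists>Y. approx_seq Y (\<lambda>n. (1/k) * (ee n)^2) x'"
    apply (rule approxB) using nn k z by (auto simp: x'_def)
  then obtain Y' where Y': "approx_seq Y' (\<lambda>n. (1/k) * (ee n)^2) x'" by blast
  define Y where "Y n a b = Y' n a (3 - b)" for n a b :: nat
  have sw: "a \<in> {1,2} \<Longrightarrow> 3 - a \<in> {1,2::nat}" for a :: nat by auto
  have sw2: "a \<in> {1,2} \<Longrightarrow> 3 - (3 - a) = (a::nat)" for a :: nat by auto
  have "approx_seq Y (\<lambda>n. k / (ee n)^2) x"
    unfolding approx_seq_def
  proof (intro conjI allI impI)
    fix n a b :: nat assume a: "a \<in> {1,2}" and b: "b \<in> {1,2}"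
    show "Y n a b > 0" using Y' a sw[OF b] unfolding approx_seq_def Y_def by blast
    show "(\<lambda>n. Y n a b) \<longlonglongrightarrow> x a b"
      using Y' a sw[OF b] sw2[OF b] unfolding approx_seq_def Y_def x'_def by metis
  next
    fix n
    have e: "Y' n 1 1 * Y' n 2 2 = (1/k) * (ee n)^2 * (Y' n 1 2 * Y' n 2 1)"
      using Y' unfolding approx_seq_def by blast
    have "Y n 1 2 * Y n 2 1 = (1/k) * (ee n)^2 * (Y n 1 1 * Y n 2 2)"
      using e by (simp add: Y_def mult.commute)
    then show "Y n 1 1 * Y n 2 2 = k / (ee n)^2 * (Y n 1 2 * Y n 2 1)"
      using k ee_pos[of n] by (simp add: field_simps)
  qed
  then show ?thesis by blast
qed



lemma hc:
  fixes q :: pmf4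
  assumes pos: "\<And>a c b d. in_space r2 r4 a c b d \<Longrightarrow> q a c b d > 0"
  and r2: "r2 \<ge> 1" and r4: "r4 \<ge> 1"
  and ci24: "\<And>a c b d. in_space r2 r4 a c b d \<Longrightarrow> q a c b d * q a 1 b 1 = q a c b 1 * q a 1 b d"
  and ci13: "\<And>a c b d. in_space r2 r4 a c b d \<Longrightarrow> q a c b d * q 1 c 1 d = q a c 1 d * q 1 c b d"
  shows "\<exists>\<psi>12 \<psi>23 \<psi>34 \<psi>14 :: nat \<Rightarrow> nat \<Rightarrow> real. \<forall>x1 x2 x3 x4. in_space r2 r4 x1 x2 x3 x4 \<longrightarrow>
          q x1 x2 x3 x4 = \<psi>12 x1 x2 * \<psi>23 x2 x3 * \<psi>34 x3 x4 * \<psi>14 x1 x4"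
proof (intro exI allI impI)
  fix a c b d assume s: "in_space r2 r4 a c b d"
  have sp: "in_space r2 r4 a c 1 d" "in_space r2 r4 1 c b d" "in_space r2 r4 1 c 1 d"
    "in_space r2 r4 a c 1 1" "in_space r2 r4 a 1 1 d" "in_space r2 r4 a 1 1 1"
    "in_space r2 r4 1 c b 1" "in_space r2 r4 1 1 b d" "in_space r2 r4 1 1 b 1"
    "in_space r2 r4 1 c 1 1" "in_space r2 r4 1 1 1 d" "in_space r2 r4 1 1 1 1"
    using s r2 r4 by (auto simp: in_space_def)
  note P = pos[OF sp(1)] pos[OF sp(2)] pos[OF sp(3)] pos[OF sp(4)] pos[OF sp(5)] pos[OF sp(6)]
     pos[OF sp(7)] pos[OF sp(8)] pos[OF sp(9)] pos[OF sp(10)] pos[OF sp(11)] pos[OF sp(12)]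
  have e1: "q a c b d = q a c 1 d * q 1 c b d / q 1 c 1 d"
    using ci13[OF s] P by (simp add: field_simps)
  have e2: "q a c 1 d = q a c 1 1 * q a 1 1 d / q a 1 1 1"
    using ci24[OF sp(1)] P by (simp add: field_simps)
  have e3: "q 1 c b d = q 1 c b 1 * q 1 1 b d / q 1 1 b 1"
    using ci24[OF sp(2)] P by (simp add: field_simps)
  have e4: "q 1 c 1 d = q 1 c 1 1 * q 1 1 1 d / q 1 1 1 1"
    using ci24[OF sp(3)] P by (simp add: field_simps)
  have "q a c b d = (q a c 1 1 * q a 1 1 d / q a 1 1 1) * (q 1 c b 1 * q 1 1 b d / q 1 1 b 1) /
        (q 1 c 1 1 * q 1 1 1 d / q 1 1 1 1)"
    using e1 e2 e3 e4 by simp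
  also have "\<dots> = (\<lambda>a c. q a c 1 1 / q 1 c 1 1) a c * (\<lambda>c b. q 1 c b 1) c b *
      (\<lambda>b d. q 1 1 b d / q 1 1 b 1) b d * (\<lambda>a d. q a 1 1 d * q 1 1 1 1 / (q a 1 1 1 * q 1 1 1 d)) a d"
    using P by (simp add: field_simps)
  finally show "q a c b d = (\<lambda>a c. q a c 1 1 / q 1 c 1 1) a c * (\<lambda>c b. q 1 c b 1) c b *
      (\<lambda>b d. q 1 1 b d / q 1 1 b 1) b d * (\<lambda>a d. q a 1 1 d * q 1 1 1 1 / (q a 1 1 1 * q 1 1 1 d)) a d" .
qed

lemma closure_from_seq:
  fixes p :: pmf4 and u v :: "nat \<Rightarrow> nat \<Rightarrow> nat \<Rightarrow> real" and W :: "nat \<Rightarrow> nat \<Rightarrow> real"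
    and U V :: "nat \<Rightarrow> nat \<Rightarrow> nat \<Rightarrow> nat \<Rightarrow> real" and lU lV :: "nat \<Rightarrow> real"
  assumes dist: "is_dist r2 r4 p" and r2: "r2 \<ge> 1" and r4: "r4 \<ge> 1"
  and Wpos: "\<forall>a\<in>{1,2}. \<forall>b\<in>{1,2}. W a b > 0"
  and fact: "\<forall>a\<in>{1,2}. \<forall>b\<in>{1,2}. \<forall>c\<in>{1..r2}. \<forall>d\<in>{1..r4}. p a c b d * W a b = u a b c * v a b d"
  and U: "\<forall>c\<in>{1..r2}. approx_seq (\<lambda>n a b. U n a b c) lU (\<lambda>a b. u a b c)"
  and V: "\<forall>d\<in>{1..r4}. approx_seq (\<lambda>n a b. V n a b d) lV (\<lambda>a b. v a b d)"
  and rel: "\<forall>n. lU n * lV n * (W 1 2 * W 2 1) = W 1 1 * W 2 2"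
  shows "closure_model_C4 r2 r4 p"
proof -
  define R where "R n a c b d = U n a b c * V n a b d / W a b" for n a c b d
  define Z where "Z n = (\<Sum>x1\<in>{1..2}. \<Sum>x2\<in>{1..r2}. \<Sum>x3\<in>{1..2}. \<Sum>x4\<in>{1..r4}. R n x1 x2 x3 x4)" for n
  define q where "q n a c b d = R n a c b d / Z n" for n a c b d
  have sp: "a \<in> {1,2} \<and> c \<in> {1..r2} \<and> b \<in> {1,2} \<and> d \<in> {1..r4}" if "in_space r2 r4 a c b d" for a c b d
    using that by (auto simp: in_space_def)
  have Rpos: "R n a c b d > 0" if "in_space r2 r4 a c b d" for n a c b d
  proof -
    from sp[OF that] have a: "a \<in> {1,2}" and c: "c \<in> {1..r2}" and b: "b \<in> {1,2}" and d: "d \<in> {1..r4}" by auto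
    have "U n a b c > 0" using U c a b unfolding approx_seq_def by blast
    moreover have "V n a b d > 0" using V d a b unfolding approx_seq_def by blast
    moreover have "W a b > 0" using Wpos a b by blast
    ultimately show ?thesis by (simp add: R_def)
  qed
  have Rlim: "(\<lambda>n. R n a c b d) \<longlonglongrightarrow> p a c b d" if "in_space r2 r4 a c b d" for a c b d
  proof -
    from sp[OF that] have a: "a \<in> {1,2}" and c: "c \<in> {1..r2}" and b: "b \<in> {1,2}" and d: "d \<in> {1..r4}" by auto
    have "(\<lambda>n. U n a b c) \<longlonglongrightarrow> u a b c" using U c a b unfolding approx_seq_def by blast
    moreover have "(\<lambda>n. V n a b d) \<longlonglongrightarrow> v a b d" using V d a b unfolding approx_seq_def by blast
    moreover have Wab: "W a b > 0" using Wpos a b by blast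
    ultimately have "(\<lambda>n. U n a b c * V n a b d / W a b) \<longlonglongrightarrow> u a b c * v a b d / W a b"
      by (intro tendsto_intros) auto
    moreover have "u a b c * v a b d / W a b = p a c b d"
      using fact a b c d Wab by (metis less_irrefl nonzero_mult_div_cancel_right)
    ultimately show ?thesis by (simp add: R_def)
  qed
  have Zpos: "Z n > 0" for n
    unfolding Z_def using r2 r4
    by (intro sum_pos) (auto intro!: Rpos simp: in_space_def)
  have Zlim: "Z \<longlonglongrightarrow> (\<Sum>x1\<in>{1..2}. \<Sum>x2\<in>{1..r2}. \<Sum>x3\<in>{1..2}. \<Sum>x4\<in>{1..r4}. p x1 x2 x3 x4)"
    unfolding Z_def by (intro tendsto_sum Rlim) (auto simp: in_space_def)
  then have Zlim1: "Z \<longlonglongrightarrow> 1" using dist by (simp add: is_dist_def)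
  have qlim: "(\<lambda>n. q n a c b d) \<longlonglongrightarrow> p a c b d" if "in_space r2 r4 a c b d" for a c b d
  proof -
    have "(\<lambda>n. R n a c b d / Z n) \<longlonglongrightarrow> p a c b d / 1"
      by (intro tendsto_intros Rlim[OF that] Zlim1) auto
    then show ?thesis by (simp add: q_def)
  qed
  have model: "model_C4 r2 r4 (q n)" for n
  proof -
    have qpos: "q n a c b d > 0" if "in_space r2 r4 a c b d" for a c b d
      using Rpos[OF that] Zpos[of n] by (simp add: q_def)
    have dist_q: "is_dist r2 r4 (q n)"
      unfolding is_dist_def
    proof
      show "\<forall>x1 x2 x3 x4. in_space r2 r4 x1 x2 x3 x4 \<longrightarrow> 0 \<le> q n x1 x2 x3 x4"
        using qpos by (auto intro: less_imp_le)
      have "(\<Sum>x1\<in>{1..2}. \<Sum>x2\<in>{1..r2}. \<Sum>x3\<in>{1..2}. \<Sum>x4\<in>{1..r4}. q n x1 x2 x3 x4) = Z n / Z n"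
        unfolding q_def by (simp only: sum_divide_distrib[symmetric] Z_def)
      then show "(\<Sum>x1\<in>{1..2}. \<Sum>x2\<in>{1..r2}. \<Sum>x3\<in>{1..2}. \<Sum>x4\<in>{1..r4}. q n x1 x2 x3 x4) = 1"
        using Zpos[of n] by simp
    qed
    have ci24: "q n a c b d * q n a 1 b 1 = q n a c b 1 * q n a 1 b d" for a c b d
      by (simp add: q_def R_def)
    have ci13: "q n a c b d * q n 1 c 1 d = q n a c 1 d * q n 1 c b d"
      if s: "in_space r2 r4 a c b d" for a c b d
    proof -
      from sp[OF that] have a: "a \<in> {1,2}" and c: "c \<in> {1..r2}" and b: "b \<in> {1,2}" and d: "d \<in> {1..r4}" by auto
      have key: "R n 2 c 2 d * R n 1 c 1 d = R n 2 c 1 d * R n 1 c 2 d"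
      proof -
        have eU: "U n 1 1 c * U n 2 2 c = lU n * (U n 1 2 c * U n 2 1 c)" using U c unfolding approx_seq_def by blast
        have eV: "V n 1 1 d * V n 2 2 d = lV n * (V n 1 2 d * V n 2 1 d)" using V d unfolding approx_seq_def by blast
        have "R n 2 c 2 d * R n 1 c 1 d = (U n 1 1 c * U n 2 2 c) * (V n 1 1 d * V n 2 2 d) / (W 1 1 * W 2 2)"
          by (simp add: R_def mult_ac)
        also have "\<dots> = (lU n * lV n) * (U n 1 2 c * U n 2 1 c) * (V n 1 2 d * V n 2 1 d) / (W 1 1 * W 2 2)"
          by (simp only: eU eV) (simp add: mult_ac)
        also have "\<dots> = (U n 1 2 c * U n 2 1 c) * (V n 1 2 d * V n 2 1 d) / (W 1 2 * W 2 1)"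
          using rel Wpos by (simp add: field_simps)
        also have "\<dots> = R n 2 c 1 d * R n 1 c 2 d"
          by (simp add: R_def mult_ac)
        finally show ?thesis .
      qed
      have "a = 1 \<or> a = 2" "b = 1 \<or> b = 2" using a b by auto
      then show ?thesis
      proof (elim disjE)
        assume "a = 2" "b = 2"
        then show ?thesis using key by (simp add: q_def)
      qed (simp_all add: mult.commute)
    qed
    obtain \<psi>12 \<psi>23 \<psi>34 \<psi>14 :: "nat \<Rightarrow> nat \<Rightarrow> real" where
      "\<forall>x1 x2 x3 x4. in_space r2 r4 x1 x2 x3 x4 \<longrightarrow> q n x1 x2 x3 x4 = \<psi>12 x1 x2 * \<psi>23 x2 x3 * \<psi>34 x3 x4 * \<psi>14 x1 x4"
      using hc[of r2 r4 "q n", OF qpos r2 r4 ci24 ci13] by blast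
    then show ?thesis unfolding model_C4_def using dist_q qpos by blast
  qed
  show ?thesis unfolding closure_model_C4_def using model qlim by blast
qed



lemma alg11: "(x11::real) * x22 = x12 * x21 \<Longrightarrow> x11 * (x11 + x12 + x21 + x22) = (x11 + x12) * (x11 + x21)" by algebra
lemma alg12: "(x11::real) * x22 = x12 * x21 \<Longrightarrow> x12 * (x11 + x12 + x21 + x22) = (x11 + x12) * (x12 + x22)" by algebra
lemma alg21: "(x11::real) * x22 = x12 * x21 \<Longrightarrow> x21 * (x11 + x12 + x21 + x22) = (x21 + x22) * (x11 + x21)" by algebra
lemma alg22: "(x11::real) * x22 = x12 * x21 \<Longrightarrow> x22 * (x11 + x12 + x21 + x22) = (x21 + x22) * (x12 + x22)" by algebra

lemma divlem:
  assumes "(M::real) > 0" "x * M = r * k" shows "x / M = r / M * (k / M)"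
proof -
  have "r / M * (k / M) = (r * k) / (M * M)" by simp
  also have "\<dots> = (x * M) / (M * M)" by (simp only: assms(2))
  also have "\<dots> = x / M" using assms(1) by simp
  finally show ?thesis by simp
qed

lemma det_CI13:
  fixes p :: pmf4
  assumes det: "\<forall>c\<in>{1..r2}. \<forall>d\<in>{1..r4}. p 1 c 1 d * p 2 c 2 d = p 1 c 2 d * p 2 c 1 d"
  shows "CI_13_24 r2 r4 p"
  unfolding CI_13_24_def Let_def
proof (intro ballI impI)
  fix c d a b :: nat
  assume c: "c \<in> {1..r2}" and d: "d \<in> {1..r4}" and m: "0 < (\<Sum>a\<in>{1..2}. \<Sum>b\<in>{1..2}. p a c b d)"
    and a: "a \<in> {1..2}" and b: "b \<in> {1..2}"
  have me: "(\<Sum>a\<in>{1..2}. \<Sum>b\<in>{1..2}. p a c b d) = p 1 c 1 d + p 1 c 2 d + p 2 c 1 d + p 2 c 2 d"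
    by (simp only: two_set) simp
  have re: "(\<Sum>b'\<in>{1..2}. p a c b' d) = p a c 1 d + p a c 2 d" by (simp only: two_set) simp
  have ce: "(\<Sum>a'\<in>{1..2}. p a' c b d) = p 1 c b d + p 2 c b d" by (simp only: two_set) simp
  have dt: "p 1 c 1 d * p 2 c 2 d = p 1 c 2 d * p 2 c 1 d" using det c d by blast
  have "a = 1 \<or> a = 2" "b = 1 \<or> b = 2" using a b by auto
  then have key: "p a c b d * (p 1 c 1 d + p 1 c 2 d + p 2 c 1 d + p 2 c 2 d) = (p a c 1 d + p a c 2 d) * (p 1 c b d + p 2 c b d)"
    using alg11[OF dt] alg12[OF dt] alg21[OF dt] alg22[OF dt] by (elim disjE) simp_all
  show "p a c b d / (\<Sum>a\<in>{1..2}. \<Sum>b\<in>{1..2}. p a c b d) =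
        (\<Sum>b'\<in>{1..2}. p a c b' d) / (\<Sum>a\<in>{1..2}. \<Sum>b\<in>{1..2}. p a c b d) *
        ((\<Sum>a'\<in>{1..2}. p a' c b d) / (\<Sum>a\<in>{1..2}. \<Sum>b\<in>{1..2}. p a c b d))"
    unfolding re ce me using m key unfolding me by (intro divlem)
qed

lemma cond2_det:
  fixes p :: pmf4
  assumes dist: "is_dist r2 r4 p" and c2: "cond2 r2 r4 p"
  shows "\<forall>c\<in>{1..r2}. \<forall>d\<in>{1..r4}. p 1 c 1 d * p 2 c 2 d = p 1 c 2 d * p 2 c 1 d"
proof (intro ballI)
  fix c d assume c: "c \<in> {1..r2}" and d: "d \<in> {1..r4}"
  obtain i E F where H: "\<forall>x1 x2 x3 x4. in_space r2 r4 x1 x2 x3 x4 \<and> p x1 x2 x3 x4 > 0 \<longrightarrow>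
            ((x1, x3) = (1, 1) \<longrightarrow> coord i x2 x4 \<in> E) \<and>
            ((x1, x3) = (1, 2) \<longrightarrow> coord i x2 x4 \<in> F) \<and>
            ((x1, x3) = (2, 1) \<longrightarrow> coord i x2 x4 \<notin> F) \<and>
            ((x1, x3) = (2, 2) \<longrightarrow> coord i x2 x4 \<notin> E)"
    using c2 unfolding cond2_def by blast
  have sp: "in_space r2 r4 a c b d" if "a \<in> {1,2}" "b \<in> {1,2}" for a b
    using that c d by (auto simp: in_space_def)
  have nn: "p a c b d \<ge> 0" if "a \<in> {1,2}" "b \<in> {1,2}" for a b
    using dist sp[OF that] by (auto simp: is_dist_def)
  have z1: "p 1 c 1 d * p 2 c 2 d = 0"
  proof (rule ccontr)
    assume "p 1 c 1 d * p 2 c 2 d \<noteq> 0"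
    then have "p 1 c 1 d > 0" "p 2 c 2 d > 0" using nn[of 1 1] nn[of 2 2] by (auto simp: less_le)
    moreover have "coord i c d \<in> E" using H[rule_format, of 1 c 1 d] sp[of 1 1] \<open>p 1 c 1 d > 0\<close> by simp
    moreover have "coord i c d \<notin> E" using H[rule_format, of 2 c 2 d] sp[of 2 2] \<open>p 2 c 2 d > 0\<close> by simp
    ultimately show False by blast
  qed
  have z2: "p 1 c 2 d * p 2 c 1 d = 0"
  proof (rule ccontr)
    assume "p 1 c 2 d * p 2 c 1 d \<noteq> 0"
    then have "p 1 c 2 d > 0" "p 2 c 1 d > 0" using nn[of 1 2] nn[of 2 1] by (auto simp: less_le)
    moreover have "coord i c d \<in> F" using H[rule_format, of 1 c 2 d] sp[of 1 2] \<open>p 1 c 2 d > 0\<close> by simp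
    moreover have "coord i c d \<notin> F" using H[rule_format, of 2 c 1 d] sp[of 2 1] \<open>p 2 c 1 d > 0\<close> by simp
    ultimately show False by blast
  qed
  show "p 1 c 1 d * p 2 c 2 d = p 1 c 2 d * p 2 c 1 d" by (simp only: z1 z2)
qed

lemma closure_det:
  fixes p :: pmf4
  assumes cl: "closure_model_C4 r2 r4 p"
  shows "\<forall>c\<in>{1..r2}. \<forall>d\<in>{1..r4}. p 1 c 1 d * p 2 c 2 d = p 1 c 2 d * p 2 c 1 d"
proof (intro ballI)
  fix c d assume c: "c \<in> {1..r2}" and d: "d \<in> {1..r4}"
  obtain q where qm: "\<forall>n. model_C4 r2 r4 (q n)" and ql: "\<forall>x1 x2 x3 x4. in_space r2 r4 x1 x2 x3 x4 \<longrightarrow>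
           (\<lambda>n. q n x1 x2 x3 x4) \<longlonglongrightarrow> p x1 x2 x3 x4"
    using cl unfolding closure_model_C4_def by blast
  have sp: "in_space r2 r4 a c b d" if "a \<in> {1,2}" "b \<in> {1,2}" for a b
    using that c d by (auto simp: in_space_def)
  have eq: "q n 1 c 1 d * q n 2 c 2 d = q n 1 c 2 d * q n 2 c 1 d" for n
  proof -
    obtain \<psi>12 \<psi>23 \<psi>34 \<psi>14 :: "nat \<Rightarrow> nat \<Rightarrow> real" where
      f: "\<forall>x1 x2 x3 x4. in_space r2 r4 x1 x2 x3 x4 \<longrightarrow> q n x1 x2 x3 x4 = \<psi>12 x1 x2 * \<psi>23 x2 x3 * \<psi>34 x3 x4 * \<psi>14 x1 x4"
      using qm unfolding model_C4_def by blast
    show ?thesis using f sp[of 1 1] sp[of 2 2] sp[of 1 2] sp[of 2 1] by (simp add: mult_ac)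
  qed
  have l1: "(\<lambda>n. q n 1 c 1 d * q n 2 c 2 d) \<longlonglongrightarrow> p 1 c 1 d * p 2 c 2 d"
    using ql sp[of 1 1] sp[of 2 2] by (intro tendsto_mult) auto
  have l2: "(\<lambda>n. q n 1 c 2 d * q n 2 c 1 d) \<longlonglongrightarrow> p 1 c 2 d * p 2 c 1 d"
    using ql sp[of 1 2] sp[of 2 1] by (intro tendsto_mult) auto
  show "p 1 c 1 d * p 2 c 2 d = p 1 c 2 d * p 2 c 1 d"
  proof -
    have "(\<lambda>n. q n 1 c 2 d * q n 2 c 1 d) \<longlonglongrightarrow> p 1 c 1 d * p 2 c 2 d" using l1 eq by simp
    from LIMSEQ_unique[OF this l2] show ?thesis .
  qed
qed



lemma ee_nz[simp]: "ee n \<noteq> 0" using ee_pos[of n] by simp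

lemma finish:
  fixes p :: pmf4 and u v :: "nat \<Rightarrow> nat \<Rightarrow> nat \<Rightarrow> real" and W :: "nat \<Rightarrow> nat \<Rightarrow> real"
    and lU lV :: "nat \<Rightarrow> real"
  assumes dist: "is_dist r2 r4 p" and r2: "r2 \<ge> 1" and r4: "r4 \<ge> 1"
  and Wpos: "\<forall>a\<in>{1,2}. \<forall>b\<in>{1,2}. W a b > 0"
  and fact: "\<forall>a\<in>{1,2}. \<forall>b\<in>{1,2}. \<forall>c\<in>{1..r2}. \<forall>d\<in>{1..r4}. p a c b d * W a b = u a b c * v a b d"
  and U: "\<forall>c\<in>{1..r2}. \<exists>Y. approx_seq Y lU (\<lambda>a b. u a b c)"
  and V: "\<forall>d\<in>{1..r4}. \<exists>Y. approx_seq Y lV (\<lambda>a b. v a b d)"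
  and rel: "\<forall>n. lU n * lV n * (W 1 2 * W 2 1) = W 1 1 * W 2 2"
  shows "closure_model_C4 r2 r4 p"
proof -
  obtain Uf where Uf: "\<forall>c\<in>{1..r2}. approx_seq (Uf c) lU (\<lambda>a b. u a b c)"
    using bchoice[OF U] by blast
  obtain Vf where Vf: "\<forall>d\<in>{1..r4}. approx_seq (Vf d) lV (\<lambda>a b. v a b d)"
    using bchoice[OF V] by blast
  show ?thesis
    apply (rule closure_from_seq[where U="\<lambda>n a b c. Uf c n a b" and V="\<lambda>n a b d. Vf d n a b"
          and lU=lU and lV=lV and u=u and v=v and W=W])
    using dist r2 r4 Wpos fact Uf Vf rel by simp_all
qed

lemma dir1:
  fixes p :: pmf4
  assumes dist: "is_dist r2 r4 p" and ci13: "CI_13_24 r2 r4 p" and ci24: "CI_24_13 r2 r4 p"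
  and nc: "\<not> cond2 r2 r4 p"
  shows "closure_model_C4 r2 r4 p"
proof -
  have nn: "p a c b d \<ge> 0" if "a \<in> {1,2}" "c \<in> {1..r2}" "b \<in> {1,2}" "d \<in> {1..r4}" for a c b d
    using dist that by (auto simp: is_dist_def in_space_def)
  have r2: "r2 \<ge> 1"
  proof (rule ccontr)
    assume "\<not> r2 \<ge> 1" then have "{1..r2} = {}" by auto
    then show False using dist by (simp add: is_dist_def)
  qed
  have r4: "r4 \<ge> 1"
  proof (rule ccontr)
    assume "\<not> r4 \<ge> 1" then have "{1..r4} = {}" by auto
    then show False using dist by (simp add: is_dist_def)
  qed
  define u where "u a b c = (\<Sum>d\<in>{1..r4}. p a c b d)" for a b c
  define v where "v a b d = (\<Sum>c\<in>{1..r2}. p a c b d)" for a b d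
  define W where "W a b = (\<Sum>c\<in>{1..r2}. \<Sum>d\<in>{1..r4}. p a c b d)" for a b
  have unn: "u a b c \<ge> 0" if "a \<in> {1,2}" "b \<in> {1,2}" "c \<in> {1..r2}" for a b c
    unfolding u_def using nn that by (intro sum_nonneg) auto
  have vnn: "v a b d \<ge> 0" if "a \<in> {1,2}" "b \<in> {1,2}" "d \<in> {1..r4}" for a b d
    unfolding v_def using nn that by (intro sum_nonneg) auto
  have Wnn: "W a b \<ge> 0" if "a \<in> {1,2}" "b \<in> {1,2}" for a b
  proof -
    have "W a b = (\<Sum>c\<in>{1..r2}. u a b c)" by (simp add: W_def u_def)
    moreover have "(\<Sum>c\<in>{1..r2}. u a b c) \<ge> 0" by (rule sum_nonneg) (use unn that in blast)
    ultimately show ?thesis by simp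
  qed
  have W0: "p a c b d = 0" if ab: "a \<in> {1,2}" "b \<in> {1,2}" and w: "W a b = 0"
    and c: "c \<in> {1..r2}" and d: "d \<in> {1..r4}" for a b c d
  proof -
    have "\<forall>c\<in>{1..r2}. u a b c = 0"
      using w unfolding W_def u_def[symmetric] using unn ab by (subst sum_nonneg_eq_0_iff[symmetric]) auto
    then have "u a b c = 0" using c by blast
    then have "\<forall>d\<in>{1..r4}. p a c b d = 0" unfolding u_def using nn ab c
      by (subst sum_nonneg_eq_0_iff[symmetric]) auto
    then show ?thesis using d by blast
  qed
  have u0: "u a b c = 0" if "a \<in> {1,2}" "b \<in> {1,2}" "W a b = 0" "c \<in> {1..r2}" for a b c
    unfolding u_def using W0 that by simp
  have v0: "v a b d = 0" if "a \<in> {1,2}" "b \<in> {1,2}" "W a b = 0" "d \<in> {1..r4}" for a b d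
    unfolding v_def using W0 that by simp
  have fact: "p a c b d * W a b = u a b c * v a b d"
    if ab: "a \<in> {1,2}" "b \<in> {1,2}" and c: "c \<in> {1..r2}" and d: "d \<in> {1..r4}" for a b c d
  proof (cases "W a b > 0")
    case True
    have ab': "a \<in> {1..2}" "b \<in> {1..2}" using ab by auto
    have "\<forall>c\<in>{1..r2}. \<forall>d\<in>{1..r4}. p a c b d / W a b = ((\<Sum>d'\<in>{1..r4}. p a c b d') / W a b) * ((\<Sum>c'\<in>{1..r2}. p a c' b d) / W a b)"
      using ci24 ab' True unfolding CI_24_13_def Let_def W_def by blast
    then have "p a c b d / W a b = (u a b c / W a b) * (v a b d / W a b)"
      using c d unfolding u_def v_def by blast
    then show ?thesis using True by (simp add: field_simps power2_eq_square)
  next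
    case False
    then have "W a b = 0" using Wnn[OF ab] by simp
    then show ?thesis using u0[OF ab _ c] W0[OF ab _ c d] by simp
  qed
  have det: "p 1 c 1 d * p 2 c 2 d = p 1 c 2 d * p 2 c 1 d" if c: "c \<in> {1..r2}" and d: "d \<in> {1..r4}" for c d
  proof -
    define m where "m = (\<Sum>a\<in>{1..2}. \<Sum>b\<in>{1..2}. p a c b d)"
    have me: "m = p 1 c 1 d + p 1 c 2 d + p 2 c 1 d + p 2 c 2 d" unfolding m_def by (simp only: two_set) simp
    have n11: "p 1 c 1 d \<ge> 0" and n12: "p 1 c 2 d \<ge> 0" and n21: "p 2 c 1 d \<ge> 0" and n22: "p 2 c 2 d \<ge> 0"
      using nn c d by auto
    show ?thesis
    proof (cases "m > 0")
      case True
      have H: "p a c b d / m = ((\<Sum>b'\<in>{1..2}. p a c b' d) / m) * ((\<Sum>a'\<in>{1..2}. p a' c b d) / m)"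
        if "a \<in> {1..2}" "b \<in> {1..2}" for a b
        using ci13 c d True that unfolding CI_13_24_def Let_def m_def by blast
      have rr: "(\<Sum>b'\<in>{1..2}. p a c b' d) = p a c 1 d + p a c 2 d" for a by (simp only: two_set) simp
      have cc: "(\<Sum>a'\<in>{1..2}. p a' c b d) = p 1 c b d + p 2 c b d" for b by (simp only: two_set) simp
      have E: "p a c b d = (p a c 1 d + p a c 2 d) * (p 1 c b d + p 2 c b d) / m"
        if "a \<in> {1..2}" "b \<in> {1..2}" for a b
        using H[OF that] True unfolding rr cc by (simp add: field_simps)
      have o1: "(1::nat) \<in> {1..2}" "(2::nat) \<in> {1..2}" by auto
      have "p 1 c 1 d * p 2 c 2 d = ((p 1 c 1 d + p 1 c 2 d) * (p 1 c 1 d + p 2 c 1 d) / m) *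
          ((p 2 c 1 d + p 2 c 2 d) * (p 1 c 2 d + p 2 c 2 d) / m)"
        by (simp only: E[OF o1(1) o1(1), symmetric] E[OF o1(2) o1(2), symmetric])
      also have "\<dots> = ((p 1 c 1 d + p 1 c 2 d) * (p 1 c 2 d + p 2 c 2 d) / m) *
          ((p 2 c 1 d + p 2 c 2 d) * (p 1 c 1 d + p 2 c 1 d) / m)"
        by (simp add: mult_ac)
      also have "\<dots> = p 1 c 2 d * p 2 c 1 d"
        by (simp only: E[OF o1(1) o1(2), symmetric] E[OF o1(2) o1(1), symmetric])
      finally show ?thesis .
    next
      case False
      then have "p 1 c 1 d = 0" "p 2 c 2 d = 0" "p 1 c 2 d = 0" "p 2 c 1 d = 0" using me n11 n12 n21 n22 by linarith+
      then show ?thesis by simp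
    qed
  qed
  define A where "A c = u 1 1 c * u 2 2 c" for c
  define B where "B c = u 1 2 c * u 2 1 c" for c
  define C where "C d = v 1 1 d * v 2 2 d" for d
  define D where "D d = v 1 2 d * v 2 1 d" for d
  have Ann: "A c \<ge> 0" "B c \<ge> 0" if "c \<in> {1..r2}" for c
    unfolding A_def B_def using unn that by simp_all
  have Cnn: "C d \<ge> 0" "D d \<ge> 0" if "d \<in> {1..r4}" for d
    unfolding C_def D_def using vnn that by simp_all
  have F1: "A c * C d = W 1 1 * W 2 2 * (p 1 c 1 d * p 2 c 2 d)"
    if "c \<in> {1..r2}" "d \<in> {1..r4}" for c d
  proof -
    have "A c * C d = (u 1 1 c * v 1 1 d) * (u 2 2 c * v 2 2 d)" unfolding A_def C_def by (simp add: mult_ac)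
    also have "\<dots> = (p 1 c 1 d * W 1 1) * (p 2 c 2 d * W 2 2)" using fact that by simp
    finally show ?thesis by (simp add: mult_ac)
  qed
  have F1': "B c * D d = W 1 2 * W 2 1 * (p 1 c 2 d * p 2 c 1 d)"
    if "c \<in> {1..r2}" "d \<in> {1..r4}" for c d
  proof -
    have "B c * D d = (u 1 2 c * v 1 2 d) * (u 2 1 c * v 2 1 d)" unfolding B_def D_def by (simp add: mult_ac)
    also have "\<dots> = (p 1 c 2 d * W 1 2) * (p 2 c 1 d * W 2 1)" using fact that by simp
    finally show ?thesis by (simp add: mult_ac)
  qed
  have upos: "u a b c > 0" if "a \<in> {1,2}" "b \<in> {1,2}" "c \<in> {1..r2}" "d \<in> {1..r4}" "p a c b d > 0" for a b c d
  proof -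
    have "p a c b d \<le> u a b c" unfolding u_def
      using that nn by (intro member_le_sum) auto
    then show ?thesis using that by simp
  qed
  have vpos: "v a b d > 0" if "a \<in> {1,2}" "b \<in> {1,2}" "c \<in> {1..r2}" "d \<in> {1..r4}" "p a c b d > 0" for a b c d
  proof -
    have "p a c b d \<le> v a b d" unfolding v_def
      using that nn by (intro member_le_sum) auto
    then show ?thesis using that by simp
  qed
  have F2a: "\<exists>c\<in>{1..r2}. A c \<noteq> 0 \<or> B c \<noteq> 0"
  proof (rule ccontr)
    assume "\<not> ?thesis"
    then have AB: "\<forall>c\<in>{1..r2}. A c = 0 \<and> B c = 0" by blast
    define E where "E = {c\<in>{1..r2}. u 1 1 c > 0}"
    define F where "F = {c\<in>{1..r2}. u 1 2 c > 0}"
    have key: "\<forall>x1 x2 x3 x4. in_space r2 r4 x1 x2 x3 x4 \<and> p x1 x2 x3 x4 > 0 \<longrightarrow>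
            ((x1, x3) = (1, 1) \<longrightarrow> coord 2 x2 x4 \<in> E) \<and>
            ((x1, x3) = (1, 2) \<longrightarrow> coord 2 x2 x4 \<in> F) \<and>
            ((x1, x3) = (2, 1) \<longrightarrow> coord 2 x2 x4 \<notin> F) \<and>
            ((x1, x3) = (2, 2) \<longrightarrow> coord 2 x2 x4 \<notin> E)"
    proof (intro allI impI)
      fix x1 x2 x3 x4 assume H: "in_space r2 r4 x1 x2 x3 x4 \<and> 0 < p x1 x2 x3 x4"
      then have s: "x1 \<in> {1,2}" "x2 \<in> {1..r2}" "x3 \<in> {1,2}" "x4 \<in> {1..r4}" and pp: "p x1 x2 x3 x4 > 0"
        by (auto simp: in_space_def)
      have cd: "coord 2 x2 x4 = x2" by (simp add: coord_def)
      note up = upos[OF s(1) s(3) s(2) s(4) pp]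
      have A0: "u 1 1 x2 * u 2 2 x2 = 0" and B0: "u 1 2 x2 * u 2 1 x2 = 0" using AB s(2) unfolding A_def B_def by auto
      show "((x1, x3) = (1, 1) \<longrightarrow> coord 2 x2 x4 \<in> E) \<and>
            ((x1, x3) = (1, 2) \<longrightarrow> coord 2 x2 x4 \<in> F) \<and>
            ((x1, x3) = (2, 1) \<longrightarrow> coord 2 x2 x4 \<notin> F) \<and>
            ((x1, x3) = (2, 2) \<longrightarrow> coord 2 x2 x4 \<notin> E)"
        using up s(2) cd A0 B0 unfolding E_def F_def by auto
    qed
    have "cond2 r2 r4 p" unfolding cond2_def
    proof (rule bexI[of _ 2])
      have sub: "E \<subseteq> {1..r2}" "F \<subseteq> {1..r2}" by (auto simp: E_def F_def)
      show "\<exists>E F. E \<subseteq> {1..(if (2::nat) = 2 then r2 else r4)} \<and> F \<subseteq> {1..(if (2::nat) = 2 then r2 else r4)} \<and>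
        (\<forall>x1 x2 x3 x4. in_space r2 r4 x1 x2 x3 x4 \<and> p x1 x2 x3 x4 > 0 \<longrightarrow>
            ((x1, x3) = (1, 1) \<longrightarrow> coord 2 x2 x4 \<in> E) \<and>
            ((x1, x3) = (1, 2) \<longrightarrow> coord 2 x2 x4 \<in> F) \<and>
            ((x1, x3) = (2, 1) \<longrightarrow> coord 2 x2 x4 \<notin> F) \<and>
            ((x1, x3) = (2, 2) \<longrightarrow> coord 2 x2 x4 \<notin> E))"
        using key sub by (intro exI[of _ E] exI[of _ F]) simp
    qed simp
    then show False using nc by blast
  qed
  have F2b: "\<exists>d\<in>{1..r4}. C d \<noteq> 0 \<or> D d \<noteq> 0"
  proof (rule ccontr)
    assume "\<not> ?thesis"
    then have CD: "\<forall>d\<in>{1..r4}. C d = 0 \<and> D d = 0" by blast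
    define E where "E = {d\<in>{1..r4}. v 1 1 d > 0}"
    define F where "F = {d\<in>{1..r4}. v 1 2 d > 0}"
    have key: "\<forall>x1 x2 x3 x4. in_space r2 r4 x1 x2 x3 x4 \<and> p x1 x2 x3 x4 > 0 \<longrightarrow>
            ((x1, x3) = (1, 1) \<longrightarrow> coord 4 x2 x4 \<in> E) \<and>
            ((x1, x3) = (1, 2) \<longrightarrow> coord 4 x2 x4 \<in> F) \<and>
            ((x1, x3) = (2, 1) \<longrightarrow> coord 4 x2 x4 \<notin> F) \<and>
            ((x1, x3) = (2, 2) \<longrightarrow> coord 4 x2 x4 \<notin> E)"
    proof (intro allI impI)
      fix x1 x2 x3 x4 assume H: "in_space r2 r4 x1 x2 x3 x4 \<and> 0 < p x1 x2 x3 x4"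
      then have s: "x1 \<in> {1,2}" "x2 \<in> {1..r2}" "x3 \<in> {1,2}" "x4 \<in> {1..r4}" and pp: "p x1 x2 x3 x4 > 0"
        by (auto simp: in_space_def)
      have cd: "coord 4 x2 x4 = x4" by (simp add: coord_def)
      note vp = vpos[OF s(1) s(3) s(2) s(4) pp]
      have C0: "v 1 1 x4 * v 2 2 x4 = 0" and D0: "v 1 2 x4 * v 2 1 x4 = 0" using CD s(4) unfolding C_def D_def by auto
      show "((x1, x3) = (1, 1) \<longrightarrow> coord 4 x2 x4 \<in> E) \<and>
            ((x1, x3) = (1, 2) \<longrightarrow> coord 4 x2 x4 \<in> F) \<and>
            ((x1, x3) = (2, 1) \<longrightarrow> coord 4 x2 x4 \<notin> F) \<and>
            ((x1, x3) = (2, 2) \<longrightarrow> coord 4 x2 x4 \<notin> E)"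
        using vp s(4) cd C0 D0 unfolding E_def F_def by auto
    qed
    have "cond2 r2 r4 p" unfolding cond2_def
    proof (rule bexI[of _ 4])
      have sub: "E \<subseteq> {1..r4}" "F \<subseteq> {1..r4}" by (auto simp: E_def F_def)
      show "\<exists>E F. E \<subseteq> {1..(if (4::nat) = 2 then r2 else r4)} \<and> F \<subseteq> {1..(if (4::nat) = 2 then r2 else r4)} \<and>
        (\<forall>x1 x2 x3 x4. in_space r2 r4 x1 x2 x3 x4 \<and> p x1 x2 x3 x4 > 0 \<longrightarrow>
            ((x1, x3) = (1, 1) \<longrightarrow> coord 4 x2 x4 \<in> E) \<and>
            ((x1, x3) = (1, 2) \<longrightarrow> coord 4 x2 x4 \<in> F) \<and>
            ((x1, x3) = (2, 1) \<longrightarrow> coord 4 x2 x4 \<notin> F) \<and>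
            ((x1, x3) = (2, 2) \<longrightarrow> coord 4 x2 x4 \<notin> E))"
        using key sub by (intro exI[of _ E] exI[of _ F]) simp
    qed simp
    then show False using nc by blast
  qed
  obtain c1 where c1: "c1 \<in> {1..r2}" "A c1 \<noteq> 0 \<or> B c1 \<noteq> 0" using F2a by blast
  obtain d1 where d1: "d1 \<in> {1..r4}" "C d1 \<noteq> 0 \<or> D d1 \<noteq> 0" using F2b by blast
  have Wpos: "\<forall>a\<in>{1,2}. \<forall>b\<in>{1,2}. W a b > 0"
  proof (rule ccontr)
    assume "\<not> ?thesis"
    then obtain a b where ab: "a \<in> {1,2}" "b \<in> {1,2}" and "\<not> W a b > 0" by blast
    then have w: "W a b = 0" using Wnn[OF ab] by simp
    show False
    proof (cases "(a = 1 \<and> b = 1) \<or> (a = 2 \<and> b = 2)")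
      case True
      have P0: "p 1 c 1 d * p 2 c 2 d = 0" if "c \<in> {1..r2}" "d \<in> {1..r4}" for c d
        using True W0[OF ab w that] by auto
      have A0: "A c = 0" if "c \<in> {1..r2}" for c using True u0[OF ab w that] unfolding A_def by auto
      have C0: "C d = 0" if "d \<in> {1..r4}" for d using True v0[OF ab w that] unfolding C_def by auto
      have "B c1 * D d1 = 0" using F1'[OF c1(1) d1(1)] det[OF c1(1) d1(1)] P0[OF c1(1) d1(1)] by simp
      then show False using c1 d1 A0 C0 by auto
    next
      case False
      then have F: "(a = 1 \<and> b = 2) \<or> (a = 2 \<and> b = 1)" using ab by auto
      have P0: "p 1 c 2 d * p 2 c 1 d = 0" if "c \<in> {1..r2}" "d \<in> {1..r4}" for c d
        using F W0[OF ab w that] by auto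
      have B0: "B c = 0" if "c \<in> {1..r2}" for c using F u0[OF ab w that] unfolding B_def by auto
      have D0: "D d = 0" if "d \<in> {1..r4}" for d using F v0[OF ab w that] unfolding D_def by auto
      have "A c1 * C d1 = 0" using F1[OF c1(1) d1(1)] det[OF c1(1) d1(1)] P0[OF c1(1) d1(1)] by simp
      then show False using c1 d1 B0 D0 by auto
    qed
  qed
  have W11: "W 1 1 > 0" and W22: "W 2 2 > 0" and W12: "W 1 2 > 0" and W21: "W 2 1 > 0" using Wpos by auto
  have I: "A c * C d * (W 1 2 * W 2 1) = B c * D d * (W 1 1 * W 2 2)"
    if "c \<in> {1..r2}" "d \<in> {1..r4}" for c d
    using F1[OF that] F1'[OF that] det[OF that] by (simp add: mult_ac)
  have factB: "\<forall>a\<in>{1,2}. \<forall>b\<in>{1,2}. \<forall>c\<in>{1..r2}. \<forall>d\<in>{1..r4}. p a c b d * W a b = u a b c * v a b d"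
    using fact by blast
  have unn': "\<forall>c\<in>{1..r2}. \<forall>a\<in>{1,2}. \<forall>b\<in>{1,2}. u a b c \<ge> 0" using unn by blast
  have vnn': "\<forall>d\<in>{1..r4}. \<forall>a\<in>{1,2}. \<forall>b\<in>{1,2}. v a b d \<ge> 0" using vnn by blast
  define \<rho> where "\<rho> = W 1 1 * W 2 2 / (W 1 2 * W 2 1)"
  have \<rho>: "\<rho> > 0" unfolding \<rho>_def using W11 W22 W12 W21 by simp
  show ?thesis
  proof (cases "\<forall>c\<in>{1..r2}. A c = 0")
    case A0: True
    then have Bc1: "B c1 \<noteq> 0" using c1 by blast
    have D0: "D d = 0" if "d \<in> {1..r4}" for d
      using I[OF c1(1) that] A0 c1(1) Bc1 W11 W22 by simp
    show ?thesis
    proof (rule finish[OF dist r2 r4 Wpos factB])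
      show "\<forall>c\<in>{1..r2}. \<exists>Y. approx_seq Y (\<lambda>n. 1 * (ee n)^2) (\<lambda>a b. u a b c)"
        proof
          fix c :: nat assume c: "c \<in> {1..r2}"
          show "\<exists>Y. approx_seq Y (\<lambda>n. 1 * (ee n)^2) (\<lambda>a b. u a b c)"
            by (rule approxB) (use unn' A0 c in \<open>auto simp: A_def\<close>)
        qed
      show "\<forall>d\<in>{1..r4}. \<exists>Y. approx_seq Y (\<lambda>n. \<rho> / (ee n)^2) (\<lambda>a b. v a b d)"
        proof
          fix d :: nat assume d: "d \<in> {1..r4}"
          show "\<exists>Y. approx_seq Y (\<lambda>n. \<rho> / (ee n)^2) (\<lambda>a b. v a b d)"
            by (rule approxB') (use vnn' D0 \<rho> d in \<open>auto simp: D_def\<close>)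
        qed
      show "\<forall>n. 1 * (ee n)^2 * (\<rho> / (ee n)^2) * (W 1 2 * W 2 1) = W 1 1 * W 2 2"
        using ee_pos W12 W21 unfolding \<rho>_def by (simp add: field_simps)
    qed
  next
    case notA0: False
    then obtain c0 where c0: "c0 \<in> {1..r2}" "A c0 \<noteq> 0" by blast
    show ?thesis
    proof (cases "\<forall>c\<in>{1..r2}. B c = 0")
      case B0: True
      have C0: "C d = 0" if "d \<in> {1..r4}" for d
        using I[OF c0(1) that] B0 c0 W12 W21 by simp
      show ?thesis
      proof (rule finish[OF dist r2 r4 Wpos factB])
        show "\<forall>c\<in>{1..r2}. \<exists>Y. approx_seq Y (\<lambda>n. \<rho> / (ee n)^2) (\<lambda>a b. u a b c)"
          proof
            fix c :: nat assume c: "c \<in> {1..r2}"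
            show "\<exists>Y. approx_seq Y (\<lambda>n. \<rho> / (ee n)^2) (\<lambda>a b. u a b c)"
              by (rule approxB') (use unn' B0 \<rho> c in \<open>auto simp: B_def\<close>)
          qed
        show "\<forall>d\<in>{1..r4}. \<exists>Y. approx_seq Y (\<lambda>n. 1 * (ee n)^2) (\<lambda>a b. v a b d)"
          proof
            fix d :: nat assume d: "d \<in> {1..r4}"
            show "\<exists>Y. approx_seq Y (\<lambda>n. 1 * (ee n)^2) (\<lambda>a b. v a b d)"
              by (rule approxB) (use vnn' C0 d in \<open>auto simp: C_def\<close>)
          qed
        show "\<forall>n. \<rho> / (ee n)^2 * (1 * (ee n)^2) * (W 1 2 * W 2 1) = W 1 1 * W 2 2"
          using ee_pos W12 W21 unfolding \<rho>_def by (simp add: field_simps)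
      qed
    next
      case False
      then obtain c2 where c2: "c2 \<in> {1..r2}" "B c2 \<noteq> 0" by blast
      have "\<exists>d0\<in>{1..r4}. C d0 \<noteq> 0"
      proof (rule ccontr)
        assume "\<not> ?thesis"
        then have C0: "\<forall>d\<in>{1..r4}. C d = 0" by blast
        then have "D d1 \<noteq> 0" using d1 by blast
        then show False using I[OF c2(1) d1(1)] C0 d1(1) c2(2) W11 W22 by simp
      qed
      then obtain d0 where d0: "d0 \<in> {1..r4}" "C d0 \<noteq> 0" by blast
      have Ap: "A c0 > 0" using Ann(1)[OF c0(1)] c0(2) by simp
      have Cp: "C d0 > 0" using Cnn(1)[OF d0(1)] d0(2) by simp
      have I0: "A c0 * C d0 * (W 1 2 * W 2 1) = B c0 * D d0 * (W 1 1 * W 2 2)" using I[OF c0(1) d0(1)] .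
      have "A c0 * C d0 * (W 1 2 * W 2 1) > 0" using Ap Cp W12 W21 by simp
      then have "B c0 * D d0 \<noteq> 0" using I0 by auto
      then have Bp: "B c0 > 0" and Dp: "D d0 > 0"
        using Ann(2)[OF c0(1)] Cnn(2)[OF d0(1)] by (auto simp: less_le)
      define l where "l = A c0 / B c0"
      define l' where "l' = C d0 / D d0"
      have lp: "l > 0" "l' > 0" unfolding l_def l'_def using Ap Bp Cp Dp by auto
      have AlB: "A c = l * B c" if c: "c \<in> {1..r2}" for c
      proof -
        have e1: "A c * C d0 * (W 1 2 * W 2 1) = B c * D d0 * (W 1 1 * W 2 2)" using I[OF c d0(1)] .
        have "A c * (B c0 * D d0 * (W 1 1 * W 2 2)) = A c * (A c0 * C d0 * (W 1 2 * W 2 1))" using I0 by simp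
        also have "\<dots> = A c0 * (A c * C d0 * (W 1 2 * W 2 1))" by (simp add: mult_ac)
        also have "\<dots> = A c0 * (B c * D d0 * (W 1 1 * W 2 2))" using e1 by simp
        finally have "(A c * B c0) * (D d0 * (W 1 1 * W 2 2)) = (A c0 * B c) * (D d0 * (W 1 1 * W 2 2))"
          by (simp add: mult_ac)
        then have "A c * B c0 = A c0 * B c" using Dp W11 W22 by simp
        then show ?thesis unfolding l_def using Bp by (simp add: field_simps)
      qed
      have ClD: "C d = l' * D d" if d: "d \<in> {1..r4}" for d
      proof -
        have e1: "A c0 * C d * (W 1 2 * W 2 1) = B c0 * D d * (W 1 1 * W 2 2)" using I[OF c0(1) d] .
        have "C d * (B c0 * D d0 * (W 1 1 * W 2 2)) = C d * (A c0 * C d0 * (W 1 2 * W 2 1))" using I0 by simp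
        also have "\<dots> = C d0 * (A c0 * C d * (W 1 2 * W 2 1))" by (simp add: mult_ac)
        also have "\<dots> = C d0 * (B c0 * D d * (W 1 1 * W 2 2))" using e1 by simp
        finally have "(C d * D d0) * (B c0 * (W 1 1 * W 2 2)) = (C d0 * D d) * (B c0 * (W 1 1 * W 2 2))"
          by (simp add: mult_ac)
        then have "C d * D d0 = C d0 * D d" using Bp W11 W22 by simp
        then show ?thesis unfolding l'_def using Dp by (simp add: field_simps)
      qed
      have rel: "l * l' * (W 1 2 * W 2 1) = W 1 1 * W 2 2"
        using I0 Bp Dp unfolding l_def l'_def by (simp add: field_simps)
      show ?thesis
      proof (rule finish[OF dist r2 r4 Wpos factB])
        show "\<forall>c\<in>{1..r2}. \<exists>Y. approx_seq Y (\<lambda>n. l) (\<lambda>a b. u a b c)"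
        proof
          fix c assume c: "c \<in> {1..r2}"
          show "\<exists>Y. approx_seq Y (\<lambda>n. l) (\<lambda>a b. u a b c)"
            using approxA[of "\<lambda>a b. u a b c" l] unn' c lp AlB[OF c] unfolding A_def B_def by auto
        qed
        show "\<forall>d\<in>{1..r4}. \<exists>Y. approx_seq Y (\<lambda>n. l') (\<lambda>a b. v a b d)"
        proof
          fix d assume d: "d \<in> {1..r4}"
          show "\<exists>Y. approx_seq Y (\<lambda>n. l') (\<lambda>a b. v a b d)"
            using approxA[of "\<lambda>a b. v a b d" l'] vnn' d lp ClD[OF d] unfolding C_def D_def by auto
        qed
        show "\<forall>n. l * l' * (W 1 2 * W 2 1) = W 1 1 * W 2 2" using rel by simp
      qed
    qed
  qed
qed

theorem corollary4p5:
  fixes r2 r4 :: nat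
  shows "(\<forall>p. is_dist r2 r4 p \<and> CI_13_24 r2 r4 p \<and> CI_24_13 r2 r4 p \<longrightarrow>
              closure_model_C4 r2 r4 p \<or> cond2 r2 r4 p) \<and>
         (\<forall>p. is_dist r2 r4 p \<and> (closure_model_C4 r2 r4 p \<or> cond2 r2 r4 p) \<and>
              CI_24_13 r2 r4 p \<longrightarrow> CI_13_24 r2 r4 p \<and> CI_24_13 r2 r4 p)"
proof (intro conjI allI impI)
  fix p assume H: "is_dist r2 r4 p \<and> CI_13_24 r2 r4 p \<and> CI_24_13 r2 r4 p"
  show "closure_model_C4 r2 r4 p \<or> cond2 r2 r4 p"
  proof (cases "cond2 r2 r4 p")
    case False then show ?thesis using dir1 H by blast
  qed simp
next
  fix p assume H: "is_dist r2 r4 p \<and> (closure_model_C4 r2 r4 p \<or> cond2 r2 r4 p) \<and> CI_24_13 r2 r4 p"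
  then show "CI_24_13 r2 r4 p" by blast
  show "CI_13_24 r2 r4 p"
    using H det_CI13 closure_det cond2_det by metis
qed

end
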